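(* Let $L$ be a semiregular Lagrangian density and let a section $\overline s$ of $J^1Y\to X$ be a solution of the first order Euler–Lagrange equations for $L$. Let $H$ be a multimomentum Hamiltonian form associated with $L$ whose momentum morphism satisfies $\widehat H\circ\widehat L\circ\overline s=\overline s$. Then the section $r=\widehat L\circ\overline s$ of $\Pi\to X$ is a solution of the Hamilton equations for $H$, and it takes its values in the constraint space $Q=\widehat L(J^1Y)$.
   Context: Let $\pi:Y\to X$ be a fibred manifold over an $n$-dimensional manifold $X$, fibred coordinates $(x^\lambda,y^i)$, $\omega=dx^1\wedge\dots\wedge dx^n$, $\omega_\lambda=\partial_\lambda\rfloor\omega$. $J^1Y$ has coordinates $(x^\lambda,y^i,y^i_\lambda)$. A Lagrangian density is $L=\mathcal L(x,y,y_\mu)\omega$, $\partial^\lambda_i=\partial/\partial y^i_\lambda$, $\pi^\lambda_i=\partial^\lambda_i\mathcal L$. The first order Euler–Lagrange equations for a section $(\overline s^i,\overline s^i_\lambda)$ of $J^1Y\to X$ are $\partial_\lambda\overline s^i=\overline s^i_\lambda$, $\partial_i\mathcal L-(\partial_\lambda+\overline s^j_\lambda\partial_j+\partial_\lambda\overline s^j_\mu\partial^\mu_j)\partial^\lambda_i\mathcal L=0$. The Legendre bundle $\Pi=\wedge^nT^*X\otimes_YTX\otimes_YV^*Y\to Y$ has coordinates $(x^\lambda,y^i,p^\lambda_i)$, $\partial^i_\lambda=\partial/\partial p^\lambda_i$; the Legendre morphism is $p^\lambda_i\circ\widehat L=\pi^\lambda_i$, $Q=\widehat L(J^1Y)$;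 $L$ is semiregular if each $\widehat L^{-1}(q)$, $q\in Q$, is a connected submanifold. A multimomentum Hamiltonian form is an $n$-form $H$ on $\Pi$, locally $p^\lambda_idy^i\wedge\omega_\lambda-\mathcal H\omega$, such that locally some jet field $\gamma$ of $\Pi\to X$ satisfies $\gamma\rfloor(dp^\lambda_i\wedge dy^i\wedge\omega\otimes\partial_\lambda)=dH$; its momentum morphism is $y^i_\lambda\circ\widehat H=\partial^i_\lambda\mathcal H$. For a bundle morphism $\Phi:\Pi\to J^1Y$ over $Y$ put $H_\Phi=p^\lambda_idy^i\wedge\omega_\lambda-p^\lambda_i\Phi^i_\lambda\omega$. $H$ is associated with $L$ if $\widehat L\circ\widehat H|_Q=\mathrm{Id}_Q$ and $H=H_{\widehat H}+\mathcal L(x,y,\partial^j_\lambda\mathcal H)\omega$. The Hamilton equations for a section $(r^i,r^\lambda_i)$ of $\Pi\to X$ are $\partial_\lambda r^i=\partial^i_\lambda\mathcal H$, $\partial_\lambda r^\lambda_i=-\partial_i\mathcal H$. *)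

theory Defs
  imports "HOL-Analysis.Analysis"
begin

fun C_k :: "nat \<Rightarrow> 'a::real_normed_vector set \<Rightarrow> ('a \<Rightarrow> 'b::real_normed_vector) \<Rightarrow> bool" where
  "C_k 0 S f = continuous_on S f"
| "C_k (Suc k) S f =
     (f differentiable_on S \<and> (\<forall>v. C_k k S (\<lambda>z. frechet_derivative f (at z) v)))"

definition Cinf_on :: "'a::real_normed_vector set \<Rightarrow> ('a \<Rightarrow> 'b::real_normed_vector) \<Rightarrow> bool" where
  "Cinf_on S f \<longleftrightarrow> (\<forall>k. C_k k S f)"

definition is_submanifold :: "'a::euclidean_space set \<Rightarrow> bool" where
  "is_submanifold S \<longleftrightarrow>
     (\<forall>a\<in>S. \<exists>U V (\<phi>::'a \<Rightarrow> 'a) \<psi> T.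
        open U \<and> a \<in> U \<and> open V \<and> Cinf_on U \<phi> \<and> Cinf_on V \<psi> \<and> \<phi> ` U = V \<and>
        (\<forall>z\<in>U. \<psi> (\<phi> z) = z) \<and> (\<forall>w\<in>V. \<phi> (\<psi> w) = w) \<and>
        subspace T \<and> \<phi> ` (S \<inter> U) = V \<inter> T)"

text \<open>A point of \<open>J\<^sup>1Y\<close> is \<open>(x, y, v)\<close> with \<open>v $ i $ \<lambda> = y^i_\<lambda>\<close>;
  a point of the Legendre bundle \<open>\<Pi>\<close> is \<open>(x, y, p)\<close> with \<open>p $ i $ \<lambda> = p^\<lambda>_i\<close>.
  The fibred manifold is an open set \<open>Y\<close> of \<open>\<real>^n \<times> \<real>^m\<close> with \<open>\<pi> = fst\<close>.\<close>

type_synonym ('n, 'm) pt = "(real^'n) \<times> (real^'m) \<times> (real^'n^'m)"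

definition bundle_over :: "((real^'n::finite) \<times> (real^'m::finite)) set \<Rightarrow> ('n, 'm) pt set" where
  "bundle_over Y = {z. (fst z, fst (snd z)) \<in> Y}"

definition px :: "(('n::finite, 'm::finite) pt \<Rightarrow> real) \<Rightarrow> 'n \<Rightarrow> ('n::finite, 'm::finite) pt \<Rightarrow> real" where
  "px F lam z = frechet_derivative F (at z) (axis lam 1, 0, 0)"

definition py :: "(('n::finite, 'm::finite) pt \<Rightarrow> real) \<Rightarrow> 'm \<Rightarrow> ('n::finite, 'm::finite) pt \<Rightarrow> real" where
  "py F i z = frechet_derivative F (at z) (0, axis i 1, 0)"

text \<open>derivative w.r.t. the fibre coordinate with indices \<open>i, \<lambda>\<close> (\<open>y^i_\<lambda>\<close> resp. \<open>p^\<lambda>_i\<close>)\<close>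
definition pv :: "(('n::finite, 'm::finite) pt \<Rightarrow> real) \<Rightarrow> 'm \<Rightarrow> 'n \<Rightarrow> ('n::finite, 'm::finite) pt \<Rightarrow> real" where
  "pv F i lam z = frechet_derivative F (at z) (0, 0, axis i (axis lam 1))"

definition dX :: "(real^'n \<Rightarrow> real) \<Rightarrow> 'n \<Rightarrow> real^'n \<Rightarrow> real" where
  "dX g lam x = frechet_derivative g (at x) (axis lam 1)"

definition legendre :: "(('n::finite, 'm::finite) pt \<Rightarrow> real) \<Rightarrow> ('n::finite, 'm::finite) pt \<Rightarrow> ('n::finite, 'm::finite) pt" where
  "legendre \<L> z = (fst z, fst (snd z), \<chi> i. \<chi> lam. pv \<L> i lam z)"

definition momentum :: "(('n::finite, 'm::finite) pt \<Rightarrow> real) \<Rightarrow> ('n::finite, 'm::finite) pt \<Rightarrow> ('n::finite, 'm::finite) pt" where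
  "momentum \<H> q = (fst q, fst (snd q), \<chi> i. \<chi> lam. pv \<H> i lam q)"

definition lagrangian :: "((real^'n::finite) \<times> (real^'m::finite)) set \<Rightarrow> (('n::finite, 'm::finite) pt \<Rightarrow> real) \<Rightarrow> bool" where
  "lagrangian Y \<L> \<longleftrightarrow> open Y \<and> Cinf_on (bundle_over Y) \<L>"

definition constraint_space :: "((real^'n::finite) \<times> (real^'m::finite)) set \<Rightarrow> (('n::finite, 'm::finite) pt \<Rightarrow> real) \<Rightarrow> ('n, 'm) pt set" where
  "constraint_space Y \<L> = legendre \<L> ` bundle_over Y"

definition semiregular :: "((real^'n::finite) \<times> (real^'m::finite)) set \<Rightarrow> (('n::finite, 'm::finite) pt \<Rightarrow> real) \<Rightarrow> bool" where
  "semiregular Y \<L> \<longleftrightarrow>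
     (\<forall>q\<in>constraint_space Y \<L>.
        connected (bundle_over Y \<inter> legendre \<L> -` {q}) \<and>
        is_submanifold (bundle_over Y \<inter> legendre \<L> -` {q}))"

text \<open>Multimomentum Hamiltonian form \<open>H = p^\<lambda>_i dy^i\<and>\<omega>_\<lambda> - \<H>\<omega>\<close>, given by \<open>\<H>\<close>.
  The condition \<open>\<gamma>\<rfloor>(dp^\<lambda>_i\<and>dy^i\<and>\<omega>\<otimes>\<partial>_\<lambda>) = dH\<close> for a jet field
  \<open>\<gamma> = dx^\<lambda>\<otimes>(\<partial>_\<lambda> + \<gamma>^i_\<lambda>\<partial>_i + \<gamma>^\<mu>_{i\<lambda>}\<partial>^i_\<mu>)\<close>, written in coordinates, reads
  \<open>\<gamma>^i_\<lambda> = \<partial>^i_\<lambda>\<H>\<close> and \<open>\<gamma>^\<lambda>_{i\<lambda>} = -\<partial>_i\<H>\<close>.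
  Here \<open>fst (\<gamma> z) $ i $ \<lambda> = \<gamma>^i_\<lambda>\<close> and \<open>snd (\<gamma> z) $ i $ \<mu> $ \<lambda> = \<gamma>^\<mu>_{i\<lambda>}\<close>.\<close>
definition mm_hamiltonian :: "((real^'n::finite) \<times> (real^'m::finite)) set \<Rightarrow> (('n::finite, 'm::finite) pt \<Rightarrow> real) \<Rightarrow> bool" where
  "mm_hamiltonian Y \<H> \<longleftrightarrow> Cinf_on (bundle_over Y) \<H> \<and>
     (\<forall>q\<in>bundle_over Y. \<exists>W (\<gamma> :: ('n::finite, 'm::finite) pt \<Rightarrow> (real^'n^'m) \<times> (real^'n^'n^'m)).
        open W \<and> q \<in> W \<and> W \<subseteq> bundle_over Y \<and> Cinf_on W \<gamma> \<and>
        (\<forall>z\<in>W. (\<forall>i lam. fst (\<gamma> z) $ i $ lam = pv \<H> i lam z) \<and>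
                (\<forall>i. (\<Sum>lam\<in>UNIV. snd (\<gamma> z) $ i $ lam $ lam) = - py \<H> i z)))"

text \<open>\<open>H\<close> associated with \<open>L\<close>: \<open>L\<^sup>\<and>\<circ>H\<^sup>\<and>|_Q = Id_Q\<close> and
  \<open>H = H_{H\<^sup>\<and>} + \<L>(x,y,\<partial>\<H>)\<omega>\<close>, i.e. \<open>\<H> = p^\<lambda>_i \<partial>^i_\<lambda>\<H> - \<L>(x,y,\<partial>\<H>)\<close> on \<open>\<Pi>\<close>.\<close>
definition associated :: "((real^'n::finite) \<times> (real^'m::finite)) set \<Rightarrow> (('n::finite, 'm::finite) pt \<Rightarrow> real) \<Rightarrow> (('n::finite, 'm::finite) pt \<Rightarrow> real) \<Rightarrow> bool" where
  "associated Y \<H> \<L> \<longleftrightarrow>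
     (\<forall>q\<in>constraint_space Y \<L>. legendre \<L> (momentum \<H> q) = q) \<and>
     (\<forall>q\<in>bundle_over Y. \<H> q =
        (\<Sum>i\<in>UNIV. \<Sum>lam\<in>UNIV. snd (snd q) $ i $ lam * pv \<H> i lam q) - \<L> (momentum \<H> q))"

text \<open>Section \<open>x \<mapsto> (x, sy x, sv x)\<close> of \<open>J\<^sup>1Y \<rightarrow> X\<close> over an open \<open>D \<subseteq> X\<close>
  solving the first order Euler--Lagrange equations.\<close>
definition EL_solution ::
  "((real^'n::finite) \<times> (real^'m::finite)) set \<Rightarrow> (('n::finite, 'm::finite) pt \<Rightarrow> real) \<Rightarrow> (real^'n) set \<Rightarrow>
   (real^'n \<Rightarrow> real^'m) \<Rightarrow> (real^'n \<Rightarrow> real^'n^'m) \<Rightarrow> bool" where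
  "EL_solution Y \<L> D sy sv \<longleftrightarrow>
     open D \<and> (\<forall>x\<in>D. (x, sy x) \<in> Y) \<and> Cinf_on D sy \<and> Cinf_on D sv \<and>
     (\<forall>x\<in>D. \<forall>i lam. dX (\<lambda>x. sy x $ i) lam x = sv x $ i $ lam) \<and>
     (\<forall>x\<in>D. \<forall>i. let z = (x, sy x, sv x) in
        py \<L> i z
        - (\<Sum>lam\<in>UNIV. px (pv \<L> i lam) lam z
            + (\<Sum>j\<in>UNIV. sv x $ j $ lam * py (pv \<L> i lam) j z)
            + (\<Sum>j\<in>UNIV. \<Sum>mu\<in>UNIV. dX (\<lambda>x. sv x $ j $ mu) lam x * pv (pv \<L> i lam) j mu z))
        = 0)"

text \<open>Section \<open>x \<mapsto> (x, ry x, rp x)\<close> of \<open>\<Pi> \<rightarrow> X\<close> over \<open>D\<close> solving the Hamilton equations.\<close>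
definition hamilton_solution ::
  "((real^'n::finite) \<times> (real^'m::finite)) set \<Rightarrow> (('n::finite, 'm::finite) pt \<Rightarrow> real) \<Rightarrow> (real^'n) set \<Rightarrow>
   (real^'n \<Rightarrow> real^'m) \<Rightarrow> (real^'n \<Rightarrow> real^'n^'m) \<Rightarrow> bool" where
  "hamilton_solution Y \<H> D ry rp \<longleftrightarrow>
     (\<forall>x\<in>D. (x, ry x) \<in> Y) \<and> ry differentiable_on D \<and> rp differentiable_on D \<and>
     (\<forall>x\<in>D. \<forall>i lam. dX (\<lambda>x. ry x $ i) lam x = pv \<H> i lam (x, ry x, rp x)) \<and>
     (\<forall>x\<in>D. \<forall>i. (\<Sum>lam\<in>UNIV. dX (\<lambda>x. rp x $ i $ lam) lam x) = - py \<H> i (x, ry x, rp x))"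

end

theory Submission
  imports Defs
begin

lemma Cinf_diff: assumes "Cinf_on S f" shows "f differentiable_on S"
proof -
  have "C_k (Suc 0) S f" using assms unfolding Cinf_on_def by (rule spec)
  then show ?thesis by simp
qed

lemma Cinf_fd: assumes "Cinf_on S f" shows "Cinf_on S (\<lambda>z. frechet_derivative f (at z) v)"
  unfolding Cinf_on_def
proof
  fix k
  have "C_k (Suc k) S f" using assms unfolding Cinf_on_def by (rule spec)
  then show "C_k k S (\<lambda>z. frechet_derivative f (at z) v)" by simp
qed

lemma Cinf_at: "Cinf_on S f \<Longrightarrow> open S \<Longrightarrow> z \<in> S \<Longrightarrow> f differentiable at z"
  using Cinf_diff differentiable_on_eq_differentiable_at by blast

lemma Cinf_pv: "Cinf_on S f \<Longrightarrow> Cinf_on S (pv f i lam)"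
  unfolding pv_def[abs_def] by (rule Cinf_fd)

lemma opn_bundle: "open Y \<Longrightarrow> open (bundle_over Y)"
proof -
  assume "open Y"
  have "bundle_over Y = (\<lambda>z. (fst z, fst (snd z))) -` Y" unfolding bundle_over_def by auto
  moreover have "continuous_on UNIV (\<lambda>z::('n::finite,'m::finite) pt. (fst z, fst (snd z)))"
    by (intro continuous_intros)
  ultimately show ?thesis using open_vimage[OF \<open>open Y\<close>] by simp
qed

lemma axn: "axis j v $ k = (if k = j then v else 0)" by (simp add: axis_def)

lemma mif: "(x::real) * (if P then 1 else 0) = (if P then x else 0)" by simp

lemma mif2: "(if P then 1 else 0) * (x::real) = (if P then x else 0)" by simp

lemma dsum: fixes f :: "'m::finite \<Rightarrow> 'n::finite \<Rightarrow> real" shows "(\<Sum>j\<in>UNIV. \<Sum>mu\<in>UNIV. (f j mu::real) * (if k = j then (if l = mu then 1 else 0) else 0)) = f k l"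
proof -
  have "(\<Sum>mu\<in>UNIV. (f j mu::real) * (if k = j then (if l = mu then 1 else 0) else 0)) = (if k = j then f j l else 0)" for j
  proof (cases "k = j")
    case True
    then show ?thesis by (simp add: mif sum.delta')
  qed simp
  then show ?thesis by (simp add: sum.delta)
qed

lemma vec2_expand: "(c::real^'n::finite^'m::finite) = (\<Sum>j\<in>UNIV. \<Sum>mu\<in>UNIV. c$j$mu *\<^sub>R axis j (axis mu 1))"
proof -
  have "(\<Sum>j\<in>UNIV. \<Sum>mu\<in>UNIV. c$j$mu *\<^sub>R axis j (axis mu 1)) $ k $ l = c $ k $ l" for k l
  proof -
    have "(\<Sum>j\<in>UNIV. \<Sum>mu\<in>UNIV. c$j$mu *\<^sub>R axis j (axis mu 1)) $ k $ l
       = (\<Sum>j\<in>UNIV. \<Sum>mu\<in>UNIV. c$j$mu * (if k = j then (if l = mu then 1 else 0) else 0))"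
      by (simp add: sum_component axn) (intro sum.cong refl, simp add: axn)
    also have "\<dots> = c $ k $ l"
      by (rule dsum)
    finally show ?thesis .
  qed
  then show ?thesis by (simp add: vec_eq_iff)
qed

lemma vec1_expand: "(c::real^'n::finite) = (\<Sum>j\<in>UNIV. c$j *\<^sub>R axis j 1)"
  by (simp add: vec_eq_iff axis_def sum.delta if_distrib cong: if_cong)

lemma lin_expand:
  fixes f :: "('n::finite,'m::finite) pt \<Rightarrow> real"
  assumes "linear f"
  shows "f (a, b, c) = (\<Sum>k\<in>UNIV. a$k * f (axis k 1, 0, 0)) + (\<Sum>j\<in>UNIV. b$j * f (0, axis j 1, 0))
     + (\<Sum>j\<in>UNIV. \<Sum>mu\<in>UNIV. c$j$mu * f (0, 0, axis j (axis mu 1)))"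
proof -
  have e: "(a, b, c) = (\<Sum>k\<in>UNIV. a$k *\<^sub>R (axis k 1, 0, 0)) + (\<Sum>j\<in>UNIV. b$j *\<^sub>R (0, axis j 1, 0))
     + (\<Sum>j\<in>UNIV. \<Sum>mu\<in>UNIV. c$j$mu *\<^sub>R (0, 0, axis j (axis mu 1)))"
    (is "_ = ?r")
  proof -
    have "?r = ((\<Sum>k\<in>UNIV. a$k *\<^sub>R axis k 1), (\<Sum>j\<in>UNIV. b$j *\<^sub>R axis j 1),
         (\<Sum>j\<in>UNIV. \<Sum>mu\<in>UNIV. c$j$mu *\<^sub>R axis j (axis mu 1)))"
      by (simp add: prod_eq_iff fst_sum snd_sum)
    then show ?thesis using vec1_expand[of a] vec1_expand[of b] vec2_expand[of c] by simp
  qed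
  show ?thesis
    by (subst e) (simp only: linear_add[OF assms] linear_sum[OF assms] linear_scale[OF assms] real_scaleR_def)
qed


lemma fd_nth:
  fixes f :: "'a::real_normed_vector \<Rightarrow> 'b::real_normed_vector^'k::finite"
  assumes "f differentiable at x"
  shows "((\<lambda>x. f x $ j) has_derivative (\<lambda>h. frechet_derivative f (at x) h $ j)) (at x)"
    "frechet_derivative (\<lambda>x. f x $ j) (at x) h = frechet_derivative f (at x) h $ j"
proof -
  have d: "(f has_derivative frechet_derivative f (at x)) (at x)"
    using assms frechet_derivative_works by blast
  show 1: "((\<lambda>x. f x $ j) has_derivative (\<lambda>h. frechet_derivative f (at x) h $ j)) (at x)"
    by (rule bounded_linear.has_derivative[OF bounded_linear_vec_nth d])
  show "frechet_derivative (\<lambda>x. f x $ j) (at x) h = frechet_derivative f (at x) h $ j"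
    using fun_cong[OF frechet_derivative_at[OF 1], of h] by simp
qed

lemma fd_nth2:
  fixes f :: "'a::real_normed_vector \<Rightarrow> real^'n::finite^'m::finite"
  assumes "f differentiable at x"
  shows "frechet_derivative (\<lambda>x. f x $ j $ mu) (at x) h = frechet_derivative f (at x) h $ j $ mu"
proof -
  have d: "(f has_derivative frechet_derivative f (at x)) (at x)"
    using assms frechet_derivative_works by blast
  have 1: "((\<lambda>x. f x $ j $ mu) has_derivative (\<lambda>h. frechet_derivative f (at x) h $ j $ mu)) (at x)"
    by (rule bounded_linear.has_derivative[OF bounded_linear_vec_nth
          bounded_linear.has_derivative[OF bounded_linear_vec_nth d]])
  show ?thesis
    using fun_cong[OF frechet_derivative_at[OF 1], of h] by simp
qed

lemma dX_comp:
  fixes F :: "('n::finite,'m::finite) pt \<Rightarrow> real"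
  assumes sy: "sy differentiable at x" and sv: "sv differentiable at x"
    and F: "F differentiable at (x, sy x, sv x)"
  shows "dX (\<lambda>x. F (x, sy x, sv x)) lam x = px F lam (x, sy x, sv x)
     + (\<Sum>j\<in>UNIV. dX (\<lambda>x. sy x $ j) lam x * py F j (x, sy x, sv x))
     + (\<Sum>j\<in>UNIV. \<Sum>mu\<in>UNIV. dX (\<lambda>x. sv x $ j $ mu) lam x * pv F j mu (x, sy x, sv x))"
proof -
  let ?z = "(x, sy x, sv x)"
  let ?F' = "frechet_derivative F (at ?z)"
  let ?a = "frechet_derivative sy (at x)"
  let ?b = "frechet_derivative sv (at x)"
  have dF: "(F has_derivative ?F') (at ?z)" using F frechet_derivative_works by blast
  have dZ: "((\<lambda>x. (x, sy x, sv x)) has_derivative (\<lambda>h. (h, ?a h, ?b h))) (at x)"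
    using sy sv frechet_derivative_works[of sy "at x"] frechet_derivative_works[of sv "at x"]
    by (intro has_derivative_Pair has_derivative_ident) auto
  have dc: "((\<lambda>x. F (x, sy x, sv x)) has_derivative (\<lambda>h. ?F' (h, ?a h, ?b h))) (at x)"
    using has_derivative_compose[OF dZ dF] .
  have "dX (\<lambda>x. F (x, sy x, sv x)) lam x = ?F' (axis lam 1, ?a (axis lam 1), ?b (axis lam 1))"
    unfolding dX_def using fun_cong[OF frechet_derivative_at[OF dc], of "axis lam 1"] by simp
  also have "\<dots> = (\<Sum>k\<in>UNIV. axis lam 1 $ k * ?F' (axis k 1, 0, 0))
     + (\<Sum>j\<in>UNIV. ?a (axis lam 1) $ j * ?F' (0, axis j 1, 0))
     + (\<Sum>j\<in>UNIV. \<Sum>mu\<in>UNIV. ?b (axis lam 1) $ j $ mu * ?F' (0, 0, axis j (axis mu 1)))"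
    by (rule lin_expand[OF has_derivative_linear[OF dF]])
  also have "(\<Sum>k\<in>UNIV. axis lam 1 $ k * ?F' (axis k 1, 0, 0)) = px F lam ?z"
    by (simp only: axn mif2 sum.delta finite UNIV_I if_True px_def)
  finally show ?thesis
    by (simp add: dX_def py_def pv_def fd_nth(2)[OF sy] fd_nth2[OF sv])
qed

lemma has_derivative_chi:
  fixes g :: "'m::finite \<Rightarrow> 'n::finite \<Rightarrow> 'a::real_normed_vector \<Rightarrow> real"
  assumes "\<And>j mu. (g j mu has_derivative g' j mu) F"
  shows "((\<lambda>w. \<chi> j mu. g j mu w) has_derivative (\<lambda>h. \<chi> j mu. g' j mu h)) F"
proof -
  have e1: "(\<lambda>w. \<chi> j mu. g j mu w) = (\<lambda>w. \<Sum>j\<in>UNIV. \<Sum>mu\<in>UNIV. g j mu w *\<^sub>R axis j (axis mu 1))"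
    by (rule ext, subst vec2_expand) simp
  have e2: "(\<lambda>h. \<chi> j mu. g' j mu h) = (\<lambda>h. \<Sum>j\<in>UNIV. \<Sum>mu\<in>UNIV. g' j mu h *\<^sub>R axis j (axis mu 1))"
    by (rule ext, subst vec2_expand) simp
  show ?thesis unfolding e1 e2
    by (intro has_derivative_sum has_derivative_scaleR_left assms)
qed


lemma key:
  fixes H L :: "('n::finite,'m::finite) pt \<Rightarrow> real"
  assumes B: "open B" and H: "Cinf_on B H" and L: "Cinf_on B L"
    and idt: "\<forall>w\<in>B. H w = (\<Sum>i\<in>UNIV. \<Sum>lam\<in>UNIV. snd (snd w) $ i $ lam * pv H i lam w) - L (momentum H w)"
    and q: "q \<in> B" and Mq: "momentum H q \<in> B"
    and pq: "\<forall>j mu. snd (snd q) $ j $ mu = pv L j mu (momentum H q)"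
  shows "py H i q = - py L i (momentum H q)"
proof -
  define G' where "G' j mu = frechet_derivative (pv H j mu) (at q)" for j mu
  define L' where "L' = frechet_derivative L (at (momentum H q))"
  define M' where "M' h = (fst h, fst (snd h), \<chi> j mu. G' j mu h)" for h :: "('n,'m) pt"
  have dG: "(pv H j mu has_derivative G' j mu) (at q)" for j mu
    unfolding G'_def using Cinf_at[OF Cinf_pv[OF H] B q] frechet_derivative_works by blast
  have dL: "(L has_derivative L') (at (momentum H q))"
    unfolding L'_def using Cinf_at[OF L B Mq] frechet_derivative_works by blast
  have Meq: "momentum H = (\<lambda>w. (fst w, fst (snd w), \<chi> j mu. pv H j mu w))"
    by (rule ext) (simp add: momentum_def)
  have dM: "(momentum H has_derivative M') (at q)"
    unfolding Meq M'_def
    by (intro has_derivative_Pair has_derivative_chi dG has_derivative_fst has_derivative_snd has_derivative_ident)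
  have dP: "((\<lambda>w::('n,'m) pt. snd (snd w) $ j $ mu) has_derivative (\<lambda>h. snd (snd h) $ j $ mu)) (at q)" for j mu
    by (intro bounded_linear.has_derivative[OF bounded_linear_vec_nth] has_derivative_snd has_derivative_ident)
  define R' where "R' h = (\<Sum>i\<in>UNIV. \<Sum>lam\<in>UNIV. snd (snd q) $ i $ lam * G' i lam h + snd (snd h) $ i $ lam * pv H i lam q)
      - L' (M' h)" for h
  have dR: "((\<lambda>w. (\<Sum>i\<in>UNIV. \<Sum>lam\<in>UNIV. snd (snd w) $ i $ lam * pv H i lam w) - L (momentum H w)) has_derivative R') (at q)"
    unfolding R'_def
    by (intro has_derivative_diff has_derivative_sum has_derivative_mult dP dG has_derivative_compose[OF dM dL])
  have dH: "(H has_derivative R') (at q)"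
    by (rule has_derivative_transform_within_open[OF dR B q]) (use idt in auto)
  have "py H i q = R' (0, axis i 1, 0)"
    unfolding py_def using fun_cong[OF frechet_derivative_at[OF dH], of "(0, axis i 1, 0)"] by simp
  also have "\<dots> = (\<Sum>j\<in>UNIV. \<Sum>mu\<in>UNIV. pv L j mu (momentum H q) * G' j mu (0, axis i 1, 0))
      - L' (0, axis i 1, \<chi> j mu. G' j mu (0, axis i 1, 0))"
    unfolding R'_def M'_def using pq by simp
  also have "L' (0, axis i 1, \<chi> j mu. G' j mu (0, axis i 1, 0)) =
      py L i (momentum H q) + (\<Sum>j\<in>UNIV. \<Sum>mu\<in>UNIV. G' j mu (0, axis i 1, 0) * pv L j mu (momentum H q))"
  proof -
    have s1: "(\<Sum>k\<in>UNIV. (0::real^'n)$k * L' (axis k 1, 0, 0)) = 0" by simp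
    have s2: "(\<Sum>j\<in>UNIV. (axis i 1::real^'m) $ j * L' (0, axis j 1, 0)) = L' (0, axis i 1, 0)"
      by (simp only: axn mif2 sum.delta finite UNIV_I if_True)
    have s3: "(\<chi> j mu. G' j mu (0, axis i 1, 0)) $ j $ mu = G' j mu (0, axis i 1, 0)" for j mu by simp
    show ?thesis
      apply (subst lin_expand[OF has_derivative_linear[OF dL]])
      unfolding s1 s2 s3
      by (simp only: py_def pv_def L'_def add_0)
  qed
  finally show ?thesis by (simp add: mult.commute)
qed

theorem proposition16p11:
  fixes Y :: "((real^'n) \<times> (real^'m)) set"
    and \<L> \<H> :: "('n, 'm) pt \<Rightarrow> real"
    and D :: "(real^'n) set"
    and sy :: "real^'n \<Rightarrow> real^'m" and sv :: "real^'n \<Rightarrow> real^'n^'m"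
  assumes "lagrangian Y \<L>"
    and "semiregular Y \<L>"
    and "EL_solution Y \<L> D sy sv"
    and "mm_hamiltonian Y \<H>"
    and "associated Y \<H> \<L>"
    and "\<forall>x\<in>D. momentum \<H> (legendre \<L> (x, sy x, sv x)) = (x, sy x, sv x)"
  shows "hamilton_solution Y \<H> D
           (\<lambda>x. fst (snd (legendre \<L> (x, sy x, sv x))))
           (\<lambda>x. snd (snd (legendre \<L> (x, sy x, sv x))))
       \<and> (\<forall>x\<in>D. legendre \<L> (x, sy x, sv x) \<in> constraint_space Y \<L>)"
proof -
  have lag: "open Y" "Cinf_on (bundle_over Y) \<L>" using assms(1) unfolding lagrangian_def by auto
  have B: "open (bundle_over Y)" using opn_bundle[OF lag(1)] .
  have Hc: "Cinf_on (bundle_over Y) \<H>" using assms(4) unfolding mm_hamiltonian_def by (rule conjunct1)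
  note ELd = assms(3)[unfolded EL_solution_def Let_def]
  note EL = ELd[THEN conjunct1] ELd[THEN conjunct2, THEN conjunct1]
    ELd[THEN conjunct2, THEN conjunct2, THEN conjunct1]
    ELd[THEN conjunct2, THEN conjunct2, THEN conjunct2, THEN conjunct1]
    ELd[THEN conjunct2, THEN conjunct2, THEN conjunct2, THEN conjunct2, THEN conjunct1]
    ELd[THEN conjunct2, THEN conjunct2, THEN conjunct2, THEN conjunct2, THEN conjunct2]
  have ass: "\<forall>q\<in>bundle_over Y. \<H> q =
        (\<Sum>i\<in>UNIV. \<Sum>lam\<in>UNIV. snd (snd q) $ i $ lam * pv \<H> i lam q) - \<L> (momentum \<H> q)"
    using assms(5) unfolding associated_def by (rule conjunct2)
  define P where "P x = (\<chi> i. \<chi> lam. pv \<L> i lam (x, sy x, sv x))" for x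
  have leg: "legendre \<L> (x, sy x, sv x) = (x, sy x, P x)" for x
    by (simp add: legendre_def P_def)
  have zB: "(x, sy x, sv x) \<in> bundle_over Y" if "x \<in> D" for x
    using EL(2) that by (simp add: bundle_over_def)
  have qB: "(x, sy x, P x) \<in> bundle_over Y" if "x \<in> D" for x
    using EL(2) that by (simp add: bundle_over_def)
  have syd: "sy differentiable at x" if "x \<in> D" for x
    using Cinf_at[OF EL(3) EL(1) that] .
  have svd: "sv differentiable at x" if "x \<in> D" for x
    using Cinf_at[OF EL(4) EL(1) that] .
  have Zd: "(\<lambda>x. (x, sy x, sv x)) differentiable at x" if "x \<in> D" for x
    using syd[OF that] svd[OF that] by (intro differentiable_Pair differentiable_ident) auto
  have Fd: "(\<lambda>x. pv \<L> i lam (x, sy x, sv x)) differentiable at x" if "x \<in> D" for x i lam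
    using differentiable_chain_at[OF Zd[OF that] Cinf_at[OF Cinf_pv[OF lag(2)] B zB[OF that]]]
    by (simp add: o_def)
  have mom: "momentum \<H> (x, sy x, P x) = (x, sy x, sv x)" if "x \<in> D" for x
    using bspec[OF assms(6) that] unfolding leg .
  have pvH: "pv \<H> i lam (x, sy x, P x) = sv x $ i $ lam" if "x \<in> D" for x i lam
    using arg_cong[OF mom[OF that], of "\<lambda>z. snd (snd z) $ i $ lam"] by (simp add: momentum_def)
  have Pd: "P differentiable_on D"
  proof -
    have Peq: "P = (\<lambda>x. \<Sum>i\<in>UNIV. \<Sum>lam\<in>UNIV. pv \<L> i lam (x, sy x, sv x) *\<^sub>R axis i (axis lam 1))"
      unfolding P_def by (rule ext, subst vec2_expand) simp
    have "(\<lambda>x. \<Sum>i\<in>UNIV. \<Sum>lam\<in>UNIV. pv \<L> i lam (x, sy x, sv x) *\<^sub>R axis i (axis lam 1)) differentiable at x"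
      if x: "x \<in> D" for x
    proof (rule differentiable_sum, simp, intro ballI)
      fix i :: 'm
      show "(\<lambda>x. \<Sum>lam\<in>UNIV. pv \<L> i lam (x, sy x, sv x) *\<^sub>R axis i (axis lam 1)) differentiable at x"
      proof (rule differentiable_sum, simp, intro ballI)
        fix lam :: 'n
        show "(\<lambda>x. pv \<L> i lam (x, sy x, sv x) *\<^sub>R axis i (axis lam 1)) differentiable at x"
          by (rule differentiable_scaleR[OF Fd[OF x] differentiable_const])
      qed
    qed
    then have "\<forall>x\<in>D. P differentiable at x" unfolding Peq by blast
    then show ?thesis by (simp only: differentiable_on_eq_differentiable_at[OF EL(1)])
  qed
  have eq2: "(\<Sum>lam\<in>UNIV. dX (\<lambda>x. P x $ i $ lam) lam x) = - py \<H> i (x, sy x, P x)" if x: "x \<in> D" for x i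
  proof -
    have k: "py \<H> i (x, sy x, P x) = - py \<L> i (x, sy x, sv x)"
    proof -
      have pq: "\<forall>j mu. snd (snd (x, sy x, P x)) $ j $ mu = pv \<L> j mu (momentum \<H> (x, sy x, P x))"
        unfolding mom[OF x] by (simp add: P_def)
      have "py \<H> i (x, sy x, P x) = - py \<L> i (momentum \<H> (x, sy x, P x))"
        by (rule key[OF B Hc lag(2) ass qB[OF x] _ pq]) (simp only: mom[OF x] zB[OF x])
      then show ?thesis by (simp only: mom[OF x])
    qed
    have "(\<Sum>lam\<in>UNIV. dX (\<lambda>x. P x $ i $ lam) lam x) = (\<Sum>lam\<in>UNIV. px (pv \<L> i lam) lam (x, sy x, sv x)
            + (\<Sum>j\<in>UNIV. sv x $ j $ lam * py (pv \<L> i lam) j (x, sy x, sv x))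
            + (\<Sum>j\<in>UNIV. \<Sum>mu\<in>UNIV. dX (\<lambda>x. sv x $ j $ mu) lam x * pv (pv \<L> i lam) j mu (x, sy x, sv x)))"
    proof (rule sum.cong[OF refl])
      fix lam
      show "dX (\<lambda>x. P x $ i $ lam) lam x = px (pv \<L> i lam) lam (x, sy x, sv x)
            + (\<Sum>j\<in>UNIV. sv x $ j $ lam * py (pv \<L> i lam) j (x, sy x, sv x))
            + (\<Sum>j\<in>UNIV. \<Sum>mu\<in>UNIV. dX (\<lambda>x. sv x $ j $ mu) lam x * pv (pv \<L> i lam) j mu (x, sy x, sv x))"
      proof -
        have fe: "(\<lambda>x. P x $ i $ lam) = (\<lambda>x. pv \<L> i lam (x, sy x, sv x))" by (simp add: P_def)
        have se: "(\<Sum>j\<in>UNIV. dX (\<lambda>x. sy x $ j) lam x * py (pv \<L> i lam) j (x, sy x, sv x))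
           = (\<Sum>j\<in>UNIV. sv x $ j $ lam * py (pv \<L> i lam) j (x, sy x, sv x))"
          using EL(5) x by simp
        show ?thesis
          unfolding fe dX_comp[OF syd[OF x] svd[OF x] Cinf_at[OF Cinf_pv[OF lag(2)] B zB[OF x]]] se ..
      qed
    qed
    also have "\<dots> = py \<L> i (x, sy x, sv x)"
    proof -
      have "py \<L> i (x, sy x, sv x)
        - (\<Sum>lam\<in>UNIV. px (pv \<L> i lam) lam (x, sy x, sv x)
            + (\<Sum>j\<in>UNIV. sv x $ j $ lam * py (pv \<L> i lam) j (x, sy x, sv x))
            + (\<Sum>j\<in>UNIV. \<Sum>mu\<in>UNIV. dX (\<lambda>x. sv x $ j $ mu) lam x * pv (pv \<L> i lam) j mu (x, sy x, sv x)))
        = 0" by (rule bspec[OF EL(6) x, THEN spec])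
      then have "py \<L> i (x, sy x, sv x)
        = (\<Sum>lam\<in>UNIV. px (pv \<L> i lam) lam (x, sy x, sv x)
            + (\<Sum>j\<in>UNIV. sv x $ j $ lam * py (pv \<L> i lam) j (x, sy x, sv x))
            + (\<Sum>j\<in>UNIV. \<Sum>mu\<in>UNIV. dX (\<lambda>x. sv x $ j $ mu) lam x * pv (pv \<L> i lam) j mu (x, sy x, sv x)))"
        by (simp only: right_minus_eq)
      then show ?thesis by (rule sym)
    qed
    finally show ?thesis using k by simp
  qed
  show ?thesis
    unfolding leg hamilton_solution_def fst_conv snd_conv
  proof (intro conjI ballI allI)
    show "(x, sy x) \<in> Y" if "x \<in> D" for x using EL(2) that by (rule bspec)
    show "(\<lambda>x. sy x) differentiable_on D" using Cinf_diff[OF EL(3)] by simp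
    show "(\<lambda>x. P x) differentiable_on D" using Pd by simp
    show "dX (\<lambda>x. sy x $ i) lam x = pv \<H> i lam (x, sy x, P x)" if "x \<in> D" for x i lam
      using bspec[OF EL(5) that] pvH[OF that] by simp
    show "(\<Sum>lam\<in>UNIV. dX (\<lambda>x. P x $ i $ lam) lam x) = - py \<H> i (x, sy x, P x)" if "x \<in> D" for x i
      using eq2[OF that] .
    show "(x, sy x, P x) \<in> constraint_space Y \<L>" if "x \<in> D" for x
      unfolding constraint_space_def by (rule image_eqI[where f="legendre \<L>", OF leg[of x, symmetric] zB[OF that]])
  qed
qed

end
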